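(* Let $G$ be a group with finite symmetric generating set $Z$, let $X,Y$ be finite sets equipped with maps to $G$, and let $K\ge0$. Then the set $$\mathcal{M}=\{(U,V)\in B^*\mid (U,V)\text{ is a } K\text{-synchronous BCD pair in }(G,d_Z)\}$$ is a regular language over the alphabet $B$.
   Context: Elements of $X$ and $Y$ are regarded as elements of $G$ via the given maps. Let $\$_X\notin X$, $\$_Y\notin Y$ be padding symbols interpreted as the identity of $G$, $X^{\$}=X\cup\{\$_X\}$, $Y^{\$}=Y\cup\{\$_Y\}$ and $B=X^{\$}\times Y^{\$}$ (a finite alphabet). A word over $B$ is written $(U,V)$ with $U\in(X^{\$})^*$, $V\in(Y^{\$})^*$ of the same length. For a word $W$, $W_j$ is its prefix of length $j$ ($W_j=W$ if $j>\ell(W)$). $(U,V)\in B^*$ is a $K$-synchronous BCD pair in $(G,d_Z)$ if there exists $g\in G$ with $|g|_Z\le K$ such that $gU=_GVg$ and $|V_j^{-1}gU_j|_Z\le K$ for all $j=0,1,2,\dots$. *)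

theory Defs
  imports "HOL-Algebra.Algebra"
begin

definition word_length :: "('a, 'b) monoid_scheme \<Rightarrow> 'a set \<Rightarrow> 'a \<Rightarrow> nat" where
  "word_length G Z g = (LEAST n. \<exists>zs. length zs = n \<and> set zs \<subseteq> Z \<and>
      g = foldr (\<lambda>z acc. z \<otimes>\<^bsub>G\<^esub> acc) zs (one G))"

text \<open>Padded letters: None is the padding symbol, evaluated as the identity.\<close>
definition pad_val :: "('a, 'b) monoid_scheme \<Rightarrow> ('c \<Rightarrow> 'a) \<Rightarrow> 'c option \<Rightarrow> 'a" where
  "pad_val G f a = (case a of None \<Rightarrow> (one G) | Some x \<Rightarrow> f x)"

definition word_val :: "('a, 'b) monoid_scheme \<Rightarrow> ('c \<Rightarrow> 'a) \<Rightarrow> 'c option list \<Rightarrow> 'a" where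
  "word_val G f U = foldr (\<lambda>a acc. pad_val G f a \<otimes>\<^bsub>G\<^esub> acc) U (one G)"

definition padded :: "'c set \<Rightarrow> 'c option set" where
  "padded A = insert None (image Some A)"

text \<open>(U,V) (given as a list of letter pairs W) is a K-synchronous BCD pair.\<close>
definition sync_BCD_pair ::
  "('a, 'b) monoid_scheme \<Rightarrow> 'a set \<Rightarrow> ('x \<Rightarrow> 'a) \<Rightarrow> ('y \<Rightarrow> 'a) \<Rightarrow> real
     \<Rightarrow> ('x option \<times> 'y option) list \<Rightarrow> bool" where
  "sync_BCD_pair G Z fX fY K W \<longleftrightarrow>
     (let U = map fst W; V = map snd W in
      \<exists>g \<in> carrier G. real (word_length G Z g) \<le> K \<and>
        g \<otimes>\<^bsub>G\<^esub> word_val G fX U = word_val G fY V \<otimes>\<^bsub>G\<^esub> g \<and>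
        (\<forall>j::nat. real (word_length G Z
            (inv\<^bsub>G\<^esub> (word_val G fY (take j V)) \<otimes>\<^bsub>G\<^esub> g \<otimes>\<^bsub>G\<^esub> word_val G fX (take j U))) \<le> K))"

definition regular_lang :: "'s set \<Rightarrow> 's list set \<Rightarrow> bool" where
  "regular_lang Alph L \<longleftrightarrow> L \<subseteq> lists Alph \<and>
     (\<exists>(Q::nat set) q0 (delta :: nat \<Rightarrow> 's \<Rightarrow> nat) F.
        finite Q \<and> q0 \<in> Q \<and> (\<forall>q\<in>Q. \<forall>b\<in>Alph. delta q b \<in> Q) \<and> F \<subseteq> Q \<and>
        L = {w \<in> lists Alph. foldl delta q0 w \<in> F})"

end

theory Submission
  imports Defs
begin

lemma regular_lang_I:
  fixes Q :: "'t set" and delta :: "'t \<Rightarrow> 's \<Rightarrow> 't"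
  assumes "L \<subseteq> lists A" "finite Q" "qi \<in> Q" "\<forall>q\<in>Q. \<forall>b\<in>A. delta q b \<in> Q" "F \<subseteq> Q"
    "L = {w \<in> lists A. foldl delta qi w \<in> F}"
  shows "regular_lang A L"
proof -
  obtain enc :: "'t \<Rightarrow> nat" and n where enc: "enc ` Q = {i. i < n}" "inj_on enc Q"
    using finite_imp_inj_to_nat_seg[OF assms(2)] by blast
  define dec where "dec = inv_into Q enc"
  have dec: "\<And>q. q \<in> Q \<Longrightarrow> dec (enc q) = q" using enc(2) unfolding dec_def by simp
  define d' where "d' = (\<lambda>m b. enc (delta (dec m) b))"
  have fold: "foldl d' (enc q) w = enc (foldl delta q w) \<and> foldl delta q w \<in> Q"
    if "q \<in> Q" "w \<in> lists A" for q w
    using that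
  proof (induction w arbitrary: q)
    case Nil then show ?case by simp
  next
    case (Cons b w)
    have "delta q b \<in> Q" using Cons assms(4) by auto
    then show ?case using Cons by (simp add: d'_def dec)
  qed
  show ?thesis unfolding regular_lang_def
  proof (intro conjI exI)
    show "L \<subseteq> lists A" by fact
    show "finite (enc ` Q)" using assms(2) by simp
    show "enc qi \<in> enc ` Q" using assms(3) by simp
    show "\<forall>q\<in>enc ` Q. \<forall>b\<in>A. d' q b \<in> enc ` Q"
      using assms(4) by (auto simp: d'_def dec)
    show "enc ` F \<subseteq> enc ` Q" using assms(5) by auto
    show "L = {w \<in> lists A. foldl d' (enc qi) w \<in> enc ` F}"
    proof -
      have "foldl d' (enc qi) w \<in> enc ` F \<longleftrightarrow> foldl delta qi w \<in> F" if "w \<in> lists A" for w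
        using fold[OF assms(3) that] assms(5) enc(2)
        by (metis (no_types, lifting) image_eqI inj_on_image_mem_iff)
      then show ?thesis using assms(6) by auto
    qed
  qed
qed

lemma wv_Nil[simp]: "word_val G f [] = \<one>\<^bsub>G\<^esub>"
  by (simp add: word_val_def)
lemma wv_Cons[simp]: "word_val G f (a # U) = pad_val G f a \<otimes>\<^bsub>G\<^esub> word_val G f U"
  by (simp add: word_val_def)

lemma pv_carrier:
  assumes "group G" "f ` A \<subseteq> carrier G" "a \<in> padded A"
  shows "pad_val G f a \<in> carrier G"
proof -
  interpret group G by fact
  show ?thesis using assms by (auto simp: padded_def pad_val_def)
qed

lemma wv_carrier:
  assumes "group G" "f ` A \<subseteq> carrier G" "set U \<subseteq> padded A"
  shows "word_val G f U \<in> carrier G"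
proof -
  interpret group G by fact
  show ?thesis using assms(3) by (induction U) (auto intro: pv_carrier[OF assms(1,2)])
qed

lemma wv_snoc:
  assumes "group G" "f ` A \<subseteq> carrier G" "set U \<subseteq> padded A" "a \<in> padded A"
  shows "word_val G f (U @ [a]) = word_val G f U \<otimes>\<^bsub>G\<^esub> pad_val G f a"
proof -
  interpret group G by fact
  show ?thesis using assms(3)
  proof (induction U)
    case Nil then show ?case using pv_carrier[OF assms(1,2,4)] by simp
  next
    case (Cons x U)
    then show ?case
      using pv_carrier[OF assms(1,2)] wv_carrier[OF assms(1,2)] assms(4)
      by (simp add: m_assoc)
  qed
qed

definition Dv where
  "Dv G fX fY W g j = inv\<^bsub>G\<^esub> (word_val G fY (take j (map snd W))) \<otimes>\<^bsub>G\<^esub> g \<otimes>\<^bsub>G\<^esub>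
      word_val G fX (take j (map fst W))"

definition stepf where
  "stepf G fX fY Bs S b = {(g, e) | g e. \<exists>d. (g, d) \<in> S \<and>
      e = inv\<^bsub>G\<^esub> (pad_val G fY (snd b)) \<otimes>\<^bsub>G\<^esub> d \<otimes>\<^bsub>G\<^esub> pad_val G fX (fst b) \<and> e \<in> Bs}"

lemma Dv_le: "j \<le> length w \<Longrightarrow> Dv G fX fY (w @ [b]) g j = Dv G fX fY w g j"
  by (simp add: Dv_def)

lemma Dv_beyond: "length w \<le> j \<Longrightarrow> Dv G fX fY w g j = Dv G fX fY w g (length w)"
  by (simp add: Dv_def)

lemma Dv_carrier:
  assumes "group G" "fX ` Xa \<subseteq> carrier G" "fY ` Ya \<subseteq> carrier G"
    "w \<in> lists (padded Xa \<times> padded Ya)" "g \<in> carrier G"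
  shows "Dv G fX fY w g j \<in> carrier G"
proof -
  interpret group G by fact
  have "set (take j (map fst w)) \<subseteq> padded Xa" "set (take j (map snd w)) \<subseteq> padded Ya"
    using assms(4) set_take_subset[of j "map fst w"] set_take_subset[of j "map snd w"] by fastforce+
  then show ?thesis unfolding Dv_def
    using wv_carrier[OF assms(1,2)] wv_carrier[OF assms(1,3)] assms(5) by simp
qed

lemma Dv_suc:
  fixes G :: "('a, 'b) monoid_scheme" (structure)
  assumes "group G" "fX ` Xa \<subseteq> carrier G" "fY ` Ya \<subseteq> carrier G"
    "w \<in> lists (padded Xa \<times> padded Ya)" "b \<in> padded Xa \<times> padded Ya" "g \<in> carrier G"
  shows "Dv G fX fY (w @ [b]) g (Suc (length w)) =
     inv\<^bsub>G\<^esub> (pad_val G fY (snd b)) \<otimes>\<^bsub>G\<^esub> Dv G fX fY w g (length w) \<otimes>\<^bsub>G\<^esub> pad_val G fX (fst b)"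
proof -
  interpret group G by fact
  have s: "set (map fst w) \<subseteq> padded Xa" "set (map snd w) \<subseteq> padded Ya"
    using assms(4) by auto
  have c: "word_val G fX (map fst w) \<in> carrier G" "word_val G fY (map snd w) \<in> carrier G"
    using wv_carrier[OF assms(1,2) s(1)] wv_carrier[OF assms(1,3) s(2)] by auto
  have p: "pad_val G fX (fst b) \<in> carrier G" "pad_val G fY (snd b) \<in> carrier G"
    using pv_carrier[OF assms(1,2)] pv_carrier[OF assms(1,3)] assms(5) by auto
  have "Dv G fX fY (w @ [b]) g (Suc (length w)) =
     inv (word_val G fY (map snd w) \<otimes> pad_val G fY (snd b)) \<otimes> g \<otimes>
       (word_val G fX (map fst w) \<otimes> pad_val G fX (fst b))"
    unfolding Dv_def using wv_snoc[OF assms(1,2) s(1)] wv_snoc[OF assms(1,3) s(2)] assms(5)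
    by auto
  also have "\<dots> = inv (pad_val G fY (snd b)) \<otimes> Dv G fX fY w g (length w) \<otimes> pad_val G fX (fst b)"
    unfolding Dv_def using c p assms(6) by (simp add: inv_mult_group m_assoc)
  finally show ?thesis .
qed

lemma state:
  assumes "group G" "fX ` Xa \<subseteq> carrier G" "fY ` Ya \<subseteq> carrier G" "Bs \<subseteq> carrier G"
    "w \<in> lists (padded Xa \<times> padded Ya)"
  shows "foldl (stepf G fX fY Bs) ((\<lambda>g. (g, g)) ` Bs) w =
     {(g, Dv G fX fY w g (length w)) | g. g \<in> Bs \<and> (\<forall>j\<le>length w. Dv G fX fY w g j \<in> Bs)}"
  using assms(5)
proof (induction w rule: rev_induct)
  case Nil
  interpret group G by fact
  have "Dv G fX fY [] g 0 = g" if "g \<in> Bs" for g using that assms(4) by (auto simp: Dv_def)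
  then show ?case by auto
next
  case (snoc b w)
  have w: "w \<in> lists (padded Xa \<times> padded Ya)" and b: "b \<in> padded Xa \<times> padded Ya"
    using snoc.prems by auto
  have suc: "\<And>g. g \<in> Bs \<Longrightarrow> Dv G fX fY (w @ [b]) g (Suc (length w)) =
     inv\<^bsub>G\<^esub> (pad_val G fY (snd b)) \<otimes>\<^bsub>G\<^esub> Dv G fX fY w g (length w) \<otimes>\<^bsub>G\<^esub> pad_val G fX (fst b)"
    using Dv_suc[OF assms(1,2,3) w b] assms(4) by auto
  show ?case
    using snoc.IH[OF w] suc
    by (auto simp: stepf_def Dv_le le_Suc_eq)
qed

lemma prodz_append:
  fixes G :: "('a, 'b) monoid_scheme" (structure)
  assumes "group G" "set xs \<subseteq> carrier G" "set ys \<subseteq> carrier G"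
  shows "foldr (\<lambda>z acc. z \<otimes>\<^bsub>G\<^esub> acc) (xs @ ys) \<one>\<^bsub>G\<^esub> =
     foldr (\<lambda>z acc. z \<otimes>\<^bsub>G\<^esub> acc) xs \<one>\<^bsub>G\<^esub> \<otimes>\<^bsub>G\<^esub> foldr (\<lambda>z acc. z \<otimes>\<^bsub>G\<^esub> acc) ys \<one>\<^bsub>G\<^esub>"
proof -
  interpret group G by fact
  have cl: "foldr (\<lambda>z acc. z \<otimes> acc) zs \<one> \<in> carrier G" if "set zs \<subseteq> carrier G" for zs
    using that by (induction zs) auto
  show ?thesis using assms(2) cl[OF assms(3)]
    by (induction xs) (auto simp: m_assoc cl)
qed

lemma gen_repr:
  fixes G :: "('a, 'b) monoid_scheme" (structure)
  assumes "group G" "Z \<subseteq> carrier G" "\<forall>z\<in>Z. inv\<^bsub>G\<^esub> z \<in> Z" "h \<in> generate G Z"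
  shows "\<exists>zs. set zs \<subseteq> Z \<and> h = foldr (\<lambda>z acc. z \<otimes>\<^bsub>G\<^esub> acc) zs \<one>\<^bsub>G\<^esub>"
  using assms(4)
proof (induction rule: generate.induct)
  case one then show ?case by (intro exI[of _ "[]"]) simp
next
  case (incl h)
  interpret group G by fact
  show ?case using incl assms(2) by (intro exI[of _ "[h]"]) auto
next
  case (inv h)
  interpret group G by fact
  show ?case using inv assms(2,3) by (intro exI[of _ "[inv h]"]) auto
next
  case (eng h1 h2)
  then obtain xs ys where "set xs \<subseteq> Z" "h1 = foldr (\<lambda>z acc. z \<otimes>\<^bsub>G\<^esub> acc) xs \<one>\<^bsub>G\<^esub>"
    "set ys \<subseteq> Z" "h2 = foldr (\<lambda>z acc. z \<otimes>\<^bsub>G\<^esub> acc) ys \<one>\<^bsub>G\<^esub>" by blast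
  then show ?case using prodz_append[OF assms(1), of xs ys] assms(2)
    by (intro exI[of _ "xs @ ys"]) auto
qed

lemma finite_ball:
  assumes "group G" "finite Z" "Z \<subseteq> carrier G" "\<forall>z\<in>Z. inv\<^bsub>G\<^esub> z \<in> Z"
    "generate G Z = carrier G"
  shows "finite {h \<in> carrier G. real (word_length G Z h) \<le> K}"
proof -
  have "{h \<in> carrier G. real (word_length G Z h) \<le> K} \<subseteq>
     (\<lambda>zs. foldr (\<lambda>z acc. z \<otimes>\<^bsub>G\<^esub> acc) zs \<one>\<^bsub>G\<^esub>) ` {zs. set zs \<subseteq> Z \<and> length zs \<le> nat \<lfloor>K\<rfloor>}"
  proof
    fix h assume h: "h \<in> {h \<in> carrier G. real (word_length G Z h) \<le> K}"
    then obtain zs where "set zs \<subseteq> Z \<and> h = foldr (\<lambda>z acc. z \<otimes>\<^bsub>G\<^esub> acc) zs \<one>\<^bsub>G\<^esub>"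
      using gen_repr[OF assms(1,3,4)] assms(5) by auto
    then have ex: "\<exists>n zs. length zs = n \<and> set zs \<subseteq> Z \<and> h = foldr (\<lambda>z acc. z \<otimes>\<^bsub>G\<^esub> acc) zs \<one>\<^bsub>G\<^esub>"
      by blast
    obtain zs' where zs': "length zs' = word_length G Z h" "set zs' \<subseteq> Z"
      "h = foldr (\<lambda>z acc. z \<otimes>\<^bsub>G\<^esub> acc) zs' \<one>\<^bsub>G\<^esub>"
      using LeastI_ex[OF ex] unfolding word_length_def by blast
    have "real (length zs') \<le> K" using zs'(1) h by simp
    then have "length zs' \<le> nat \<lfloor>K\<rfloor>" by (simp add: le_nat_floor)
    then show "h \<in> (\<lambda>zs. foldr (\<lambda>z acc. z \<otimes>\<^bsub>G\<^esub> acc) zs \<one>\<^bsub>G\<^esub>) ` {zs. set zs \<subseteq> Z \<and> length zs \<le> nat \<lfloor>K\<rfloor>}"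
      using zs' by blast
  qed
  then show ?thesis using finite_lists_length_le[OF assms(2)] finite_subset by blast
qed

lemma conj_eq:
  fixes G :: "('a, 'b) monoid_scheme" (structure)
  assumes "group G" "a \<in> carrier G" "b \<in> carrier G" "c \<in> carrier G"
  shows "(inv\<^bsub>G\<^esub> a \<otimes>\<^bsub>G\<^esub> b \<otimes>\<^bsub>G\<^esub> c = b) \<longleftrightarrow> (b \<otimes>\<^bsub>G\<^esub> c = a \<otimes>\<^bsub>G\<^esub> b)"
proof -
  interpret group G by fact
  show ?thesis using assms inv_solve_left[of b a "b \<otimes> c"] by (auto simp: m_assoc)
qed

theorem lemma5p11:
  fixes G :: "('a, 'b) monoid_scheme" and Z :: "'a set"
    and Xa :: "'x set" and Ya :: "'y set" and fX :: "'x \<Rightarrow> 'a" and fY :: "'y \<Rightarrow> 'a"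
    and K :: real
  assumes "group G"
    and "finite Z" and "Z \<subseteq> carrier G" and "\<forall>z\<in>Z. inv\<^bsub>G\<^esub> z \<in> Z"
    and "generate G Z = carrier G"
    and "finite Xa" and "finite Ya"
    and "fX ` Xa \<subseteq> carrier G" and "fY ` Ya \<subseteq> carrier G"
    and "K \<ge> 0"
  shows "regular_lang (padded Xa \<times> padded Ya)
           {W \<in> lists (padded Xa \<times> padded Ya). sync_BCD_pair G Z fX fY K W}"
proof -
  interpret group G by fact
  define Bs where "Bs = {h \<in> carrier G. real (word_length G Z h) \<le> K}"
  have fB: "finite Bs" unfolding Bs_def using finite_ball[OF assms(1-5)] .
  have BsC: "Bs \<subseteq> carrier G" unfolding Bs_def by auto
  let ?A = "padded Xa \<times> padded Ya"
  let ?Q = "Pow (Bs \<times> Bs)"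
  let ?F = "{S \<in> ?Q. \<exists>g. (g, g) \<in> S}"
  let ?d = "stepf G fX fY Bs"
  let ?q0 = "(\<lambda>g. (g, g)) ` Bs"
  have key: "sync_BCD_pair G Z fX fY K w \<longleftrightarrow> foldl ?d ?q0 w \<in> ?F" if w: "w \<in> lists ?A" for w
  proof -
    note st = state[OF assms(1,8,9) BsC w]
    have sub: "foldl ?d ?q0 w \<in> ?Q" unfolding st by auto
    have Dc: "\<And>g j. g \<in> carrier G \<Longrightarrow> Dv G fX fY w g j \<in> carrier G"
      using Dv_carrier[OF assms(1,8,9) w] by blast
    have sU: "set (map fst w) \<subseteq> padded Xa" "set (map snd w) \<subseteq> padded Ya" using w by auto
    have cU: "word_val G fX (map fst w) \<in> carrier G" "word_val G fY (map snd w) \<in> carrier G"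
      using wv_carrier[OF assms(1,8) sU(1)] wv_carrier[OF assms(1,9) sU(2)] by auto
    have eqv: "(g \<otimes>\<^bsub>G\<^esub> word_val G fX (map fst w) = word_val G fY (map snd w) \<otimes>\<^bsub>G\<^esub> g)
        \<longleftrightarrow> Dv G fX fY w g (length w) = g" if "g \<in> carrier G" for g
      using conj_eq[OF assms(1) cU(2) that cU(1)] by (simp add: Dv_def)
    have allj: "(\<forall>j. real (word_length G Z (Dv G fX fY w g j)) \<le> K) \<longleftrightarrow>
        (\<forall>j\<le>length w. Dv G fX fY w g j \<in> Bs)" if "g \<in> carrier G" for g
    proof
      assume "\<forall>j. real (word_length G Z (Dv G fX fY w g j)) \<le> K"
      then show "\<forall>j\<le>length w. Dv G fX fY w g j \<in> Bs" using Dc[OF that] by (auto simp: Bs_def)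
    next
      assume a: "\<forall>j\<le>length w. Dv G fX fY w g j \<in> Bs"
      show "\<forall>j. real (word_length G Z (Dv G fX fY w g j)) \<le> K"
      proof
        fix j
        have "Dv G fX fY w g j \<in> Bs"
        proof (cases "j \<le> length w")
          case True then show ?thesis using a by auto
        next
          case False then show ?thesis using a Dv_beyond[of w j G fX fY g] by auto
        qed
        then show "real (word_length G Z (Dv G fX fY w g j)) \<le> K" by (simp add: Bs_def)
      qed
    qed
    have "sync_BCD_pair G Z fX fY K w \<longleftrightarrow>
       (\<exists>g\<in>carrier G. real (word_length G Z g) \<le> K \<and>
         Dv G fX fY w g (length w) = g \<and> (\<forall>j. real (word_length G Z (Dv G fX fY w g j)) \<le> K))"
      unfolding sync_BCD_pair_def Let_def Dv_def[symmetric] using eqv by metis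
    also have "\<dots> \<longleftrightarrow> (\<exists>g. g \<in> Bs \<and> Dv G fX fY w g (length w) = g \<and>
         (\<forall>j\<le>length w. Dv G fX fY w g j \<in> Bs))"
      using allj by (auto simp: Bs_def)
    also have "\<dots> \<longleftrightarrow> foldl ?d ?q0 w \<in> ?F"
      using sub unfolding st by (auto; metis)
    finally show ?thesis .
  qed
  show ?thesis
  proof (rule regular_lang_I[where Q = ?Q and qi = ?q0 and delta = ?d and F = ?F])
    show "finite ?Q" using fB by simp
    show "?q0 \<in> ?Q" by auto
    show "\<forall>q\<in>?Q. \<forall>b\<in>?A. ?d q b \<in> ?Q" by (auto simp: stepf_def)
    show "?F \<subseteq> ?Q" by auto
    show "{W \<in> lists ?A. sync_BCD_pair G Z fX fY K W} = {w \<in> lists ?A. foldl ?d ?q0 w \<in> ?F}"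
      using key by blast
  qed auto
qed

end
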